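(* Let $t,w,w',n,g$ be positive integers with $t\le w\le w'$. Suppose that there exists a $t$-resolvable Steiner system $\mathrm{S}(w,w',n)$. If there exists an $\mathrm{LGMHP}^*(t,w,w',g)$, then there exists an $\mathrm{LGMHP}^*(t,w,n,g)$.
   Context: A Steiner system $\mathrm{S}(s,k,n)$ is a pair $(X,\mathcal{B})$ with $|X|=n$ and $\mathcal{B}$ a family of $k$-subsets (blocks) of $X$ such that every $s$-subset of $X$ lies in exactly one block. An $\mathrm{S}(w,w',n)$ $(X,\mathcal{B})$ is $t$-resolvable if $\mathcal{B}$ can be partitioned into block sets of $\mathrm{S}(t,w',n)$'s on $X$. For a set $Y$ of size $m$, let $X=Y\times[g]$ with groups $\{y\}\times[g]$. An H-packing $\mathrm{HP}(m,g,w,t)$ is a family of $w$-subsets (blocks) of $X$, each meeting every group in at most one point, such that every $t$-subset of $X$ with points in $t$ distinct groups lies in at most one block. A block $\{(y_1,a_1),\dots,(y_w,a_w)\}$ is identified with the word indexed by $Y$ over $\{0\}\cup[g]$ with entry $a_s$ at coordinate $y_s$ and $0$ elsewhere. A $\mathrm{GMHP}^*(t,w,m,g)$ is an $\mathrm{HP}(m,g,w,t)$ in which any two distinct blocks have Hamming distance at least $2(w-t+1)$ and which has exactly $g^{t-1}\binom{m}{t}/\binom{w}{t}$ blocks. An $\mathrm{LGMHP}^*(t,w,m,g)$ is a partition of the set of all $w$-subsets of $Y\times[g]$ meeting each group in at most one point into block sets of $\mathrm{GMHP}^*(t,w,m,g)$'s. *)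

theory Defs
  imports Complex_Main "HOL-Library.Disjoint_Sets"
begin

definition steiner_system :: "nat \<Rightarrow> nat \<Rightarrow> 'a set \<Rightarrow> 'a set set \<Rightarrow> bool" where
  "steiner_system s k X B \<longleftrightarrow>
     (\<forall>b\<in>B. b \<subseteq> X \<and> card b = k) \<and>
     (\<forall>S. S \<subseteq> X \<and> card S = s \<longrightarrow> (\<exists>!b. b \<in> B \<and> S \<subseteq> b))"

definition t_resolvable :: "nat \<Rightarrow> nat \<Rightarrow> nat \<Rightarrow> 'a set \<Rightarrow> 'a set set \<Rightarrow> bool" where
  "t_resolvable t w w' X B \<longleftrightarrow>
     steiner_system w w' X B \<and>
     (\<exists>P. partition_on B P \<and> (\<forall>C\<in>P. steiner_system t w' X C))"

(* w-subsets of Y \<times> [g] meeting every group {y} \<times> [g] in at most one point *)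
definition transversal :: "'a set \<Rightarrow> nat \<Rightarrow> nat \<Rightarrow> ('a \<times> nat) set \<Rightarrow> bool" where
  "transversal Y g w b \<longleftrightarrow> b \<subseteq> Y \<times> {1..g} \<and> card b = w \<and> inj_on fst b"

definition hpacking :: "nat \<Rightarrow> nat \<Rightarrow> 'a set \<Rightarrow> nat \<Rightarrow> ('a \<times> nat) set set \<Rightarrow> bool" where
  "hpacking t w Y g Bs \<longleftrightarrow>
     (\<forall>b\<in>Bs. transversal Y g w b) \<and>
     (\<forall>T. T \<subseteq> Y \<times> {1..g} \<and> card T = t \<and> inj_on fst T \<longrightarrow>
          card {b\<in>Bs. T \<subseteq> b} \<le> 1)"

(* the word indexed by Y over {0} \<union> [g] associated with a block *)
definition word :: "('a \<times> nat) set \<Rightarrow> 'a \<Rightarrow> nat" where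
  "word b y = (if \<exists>a. (y, a) \<in> b then (THE a. (y, a) \<in> b) else 0)"

definition hdist :: "'a set \<Rightarrow> ('a \<times> nat) set \<Rightarrow> ('a \<times> nat) set \<Rightarrow> nat" where
  "hdist Y b c = card {y\<in>Y. word b y \<noteq> word c y}"

definition gmhp :: "nat \<Rightarrow> nat \<Rightarrow> 'a set \<Rightarrow> nat \<Rightarrow> ('a \<times> nat) set set \<Rightarrow> bool" where
  "gmhp t w Y g Bs \<longleftrightarrow>
     hpacking t w Y g Bs \<and>
     (\<forall>b\<in>Bs. \<forall>c\<in>Bs. b \<noteq> c \<longrightarrow> hdist Y b c \<ge> 2 * (w - t + 1)) \<and>
     real (card Bs) = real g ^ (t - 1) * real (card Y choose t) / real (w choose t)"

definition lgmhp :: "nat \<Rightarrow> nat \<Rightarrow> 'a set \<Rightarrow> nat \<Rightarrow> ('a \<times> nat) set set set \<Rightarrow> bool" where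
  "lgmhp t w Y g P \<longleftrightarrow>
     partition_on {b. transversal Y g w b} P \<and> (\<forall>Bs\<in>P. gmhp t w Y g Bs)"

end

theory Submission
  imports Defs
begin

definition lift :: "('b \<Rightarrow> 'a) \<Rightarrow> ('b \<times> nat) set \<Rightarrow> ('a \<times> nat) set" where
  "lift f q = map_prod f id ` q"

definition pull :: "('b \<Rightarrow> 'a) \<Rightarrow> 'b set \<Rightarrow> ('a \<times> nat) set \<Rightarrow> ('b \<times> nat) set" where
  "pull f A b = {(y, a). y \<in> A \<and> (f y, a) \<in> b}"

lemma word_in: "inj_on fst b \<Longrightarrow> (x, a) \<in> b \<Longrightarrow> word b x = a"
  unfolding word_def
  by (auto intro!: the_equality dest: inj_onD[where x="(x,_)" and y="(x,_)"])

lemma word_notin: "x \<notin> fst ` b \<Longrightarrow> word b x = 0"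
  unfolding word_def by force

lemma word_pos: "b \<subseteq> Y \<times> {1..g} \<Longrightarrow> inj_on fst b \<Longrightarrow> x \<in> fst ` b \<Longrightarrow> word b x \<noteq> 0"
  using word_in by fastforce

lemma fst_lift: "fst ` lift f q = f ` fst ` q"
  unfolding lift_def by force

lemma lift_pull: "fst ` b \<subseteq> f ` A \<Longrightarrow> lift f (pull f A b) = b"
  unfolding lift_def pull_def by force

lemma pull_lift: "inj_on f A \<Longrightarrow> fst ` q \<subseteq> A \<Longrightarrow> pull f A (lift f q) = q"
  unfolding lift_def pull_def by (force dest: inj_onD)

lemma pull_mono: "T \<subseteq> b \<Longrightarrow> pull f A T \<subseteq> pull f A b"
  unfolding pull_def by auto

lemma inj_lift_on: "inj_on f A \<Longrightarrow> fst ` q \<subseteq> A \<Longrightarrow> inj_on (map_prod f id) q"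
proof (rule inj_onI)
  fix x y assume "inj_on f A" "fst ` q \<subseteq> A" "x \<in> q" "y \<in> q" "map_prod f id x = map_prod f id y"
  note as = this
  obtain a b where x: "x = (a,b)" by force
  obtain c d where y: "y = (c,d)" by force
  have "a \<in> A" "c \<in> A" using as x y by force+
  moreover have "f a = f c" "b = d" using as(5) x y by simp_all
  ultimately show "x = y" using x y inj_onD[OF as(1)] by simp
qed

lemma card_lift: "inj_on f A \<Longrightarrow> fst ` q \<subseteq> A \<Longrightarrow> card (lift f q) = card q"
  unfolding lift_def by (rule card_image) (rule inj_lift_on)

lemma inj_fst_lift: "inj_on f A \<Longrightarrow> fst ` q \<subseteq> A \<Longrightarrow> inj_on fst q \<Longrightarrow> inj_on fst (lift f q)"
proof (unfold lift_def, rule inj_onI)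
  fix x y assume as: "inj_on f A" "fst ` q \<subseteq> A" "inj_on fst q" "x \<in> map_prod f id ` q" "y \<in> map_prod f id ` q" "fst x = fst y"
  then obtain a b c d where xy: "(a,b) \<in> q" "(c,d) \<in> q" "x = (f a, b)" "y = (f c, d)" by auto
  have "a \<in> A" "c \<in> A" using as(2) xy(1,2) by force+
  moreover have "f a = f c" using as(6) xy(3,4) by simp
  ultimately have "a = c" using inj_onD[OF as(1)] by simp
  then have "(a,b) = (c,d)" using inj_onD[OF as(3) _ xy(1,2)] by simp
  then show "x = y" using xy by simp
qed

lemma inj_fst_pull: "inj_on fst b \<Longrightarrow> inj_on fst (pull f A b)"
  proof (rule inj_onI)
  fix x y assume as: "inj_on fst b" "x \<in> pull f A b" "y \<in> pull f A b" "fst x = fst y"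
  then have "(f (fst x), snd x) \<in> b" "(f (fst x), snd y) \<in> b" unfolding pull_def by (auto simp: split_beta)
  then have "(f (fst x), snd x) = (f (fst x), snd y)" using inj_onD[OF as(1)] by fastforce
  then show "x = y" using as(4) by (simp add: prod_eq_iff)
qed

lemma transversal_lift:
  assumes "transversal A g w q" "inj_on f A" "f ` A \<subseteq> Y"
  shows "transversal Y g w (lift f q)"
proof -
  have q: "q \<subseteq> A \<times> {1..g}" "card q = w" "inj_on fst q" using assms(1) by (auto simp: transversal_def)
  have f: "fst ` q \<subseteq> A" using q by auto
  show ?thesis unfolding transversal_def
    using q assms(3) card_lift[OF assms(2) f] inj_fst_lift[OF assms(2) f q(3)]
    by (auto simp: lift_def)
qed

lemma transversal_pull:
  assumes "transversal Y g w b" "inj_on f A" "fst ` b \<subseteq> f ` A"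
  shows "transversal A g w (pull f A b)"
proof -
  have b: "b \<subseteq> Y \<times> {1..g}" "card b = w" "inj_on fst b" using assms(1) by (auto simp: transversal_def)
  have f: "fst ` pull f A b \<subseteq> A" unfolding pull_def by auto
  have "card (pull f A b) = w"
    using card_lift[OF assms(2) f] lift_pull[OF assms(3)] b by simp
  then show ?thesis unfolding transversal_def using inj_fst_pull[OF b(3)] b(1)
    by (auto simp: pull_def)
qed

lemma word_lift:
  assumes "inj_on f A" "fst ` q \<subseteq> A" "inj_on fst q" "y \<in> A"
  shows "word (lift f q) (f y) = word q y"
proof (cases "y \<in> fst ` q")
  case True
  then obtain a where a: "(y, a) \<in> q" by force
  then have "(f y, a) \<in> lift f q" unfolding lift_def by force
  then show ?thesis using word_in[OF inj_fst_lift[OF assms(1-3)]] word_in[OF assms(3) a] by simp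
next
  case False
  then have "f y \<notin> fst ` lift f q" using assms by (auto simp: fst_lift dest: inj_onD)
  then show ?thesis using word_notin False by metis
qed

lemma steiner_blocks: "steiner_system s k Y C \<Longrightarrow> B \<in> C \<Longrightarrow> B \<subseteq> Y \<and> card B = k"
  unfolding steiner_system_def by blast

lemma steiner_unique:
  assumes "steiner_system s k Y C" "B1 \<in> C" "B2 \<in> C" "S \<subseteq> B1" "S \<subseteq> B2" "card S = s"
  shows "B1 = B2"
proof -
  have "S \<subseteq> Y" using steiner_blocks[OF assms(1,2)] assms(4) by blast
  then have "S \<subseteq> Y \<and> card S = s" using assms(6) by simp
  then have "\<exists>!b. b \<in> C \<and> S \<subseteq> b" using assms(1) unfolding steiner_system_def by simp
  then obtain b where b: "\<forall>y. y \<in> C \<and> S \<subseteq> y \<longrightarrow> y = b" by (elim ex1E) blast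
  have "B1 = b" using b assms(2,4) by metis
  moreover have "B2 = b" using b assms(3,5) by metis
  ultimately show ?thesis by simp
qed

lemma block_inter:
  assumes "finite Y" "steiner_system t k Y C" "B1 \<in> C" "B2 \<in> C" "B1 \<noteq> B2"
  shows "card (B1 \<inter> B2) < t"
proof (rule ccontr)
  assume "\<not> ?thesis"
  then obtain S where S: "S \<subseteq> B1 \<inter> B2" "card S = t" using obtain_subset_with_card_n by (metis not_less)
  then show False using steiner_unique[OF assms(2-4), of S] assms(5) by blast
qed

lemma count_blocks:
  assumes fin: "finite Y" and St: "steiner_system t k Y C"
  shows "card C * (k choose t) = card Y choose t"
proof -
  have sub: "C \<subseteq> Pow Y" using steiner_blocks[OF St] by blast
  then have finC: "finite C" using fin by (meson finite_Pow_iff finite_subset)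
  have eq: "{T. T \<subseteq> Y \<and> card T = t} = (\<Union>B\<in>C. {T. T \<subseteq> B \<and> card T = t})"
  proof
    show "{T. T \<subseteq> Y \<and> card T = t} \<subseteq> (\<Union>B\<in>C. {T. T \<subseteq> B \<and> card T = t})"
      using St unfolding steiner_system_def by blast
    show "(\<Union>B\<in>C. {T. T \<subseteq> B \<and> card T = t}) \<subseteq> {T. T \<subseteq> Y \<and> card T = t}"
      using sub by blast
  qed
  have "card (\<Union>B\<in>C. {T. T \<subseteq> B \<and> card T = t}) = (\<Sum>B\<in>C. card {T. T \<subseteq> B \<and> card T = t})"
  proof (rule card_UN_disjoint[OF finC])
    show "\<forall>B\<in>C. finite {T. T \<subseteq> B \<and> card T = t}"
      using sub fin by (auto intro: finite_subset[of _ "Pow Y"])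
    show "\<forall>i\<in>C. \<forall>j\<in>C. i \<noteq> j \<longrightarrow> {T. T \<subseteq> i \<and> card T = t} \<inter> {T. T \<subseteq> j \<and> card T = t} = {}"
      using steiner_unique[OF St] by blast
  qed
  also have "\<dots> = (\<Sum>B\<in>C. k choose t)"
  proof (rule sum.cong[OF refl])
    fix B assume "B \<in> C"
    then have "finite B" "card B = k" using sub fin steiner_blocks[OF St] by (auto intro: finite_subset)
    then show "card {T. T \<subseteq> B \<and> card T = t} = k choose t" using n_subsets by metis
  qed
  finally show ?thesis using eq n_subsets[OF fin, of t] by simp
qed

lemma finite_transversal: "finite A \<Longrightarrow> finite {b. transversal A g w b}"
proof (rule finite_subset)
  show "{b. transversal A g w b} \<subseteq> Pow (A \<times> {1..g})" by (auto simp: transversal_def)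
  show "finite A \<Longrightarrow> finite (Pow (A \<times> {1..g}))" by simp
qed

lemma main:
  fixes Y :: "'a set" and Bs :: "'a set set" and R :: "'a set set set"
    and Q :: "(nat \<times> nat) set set set"
  assumes fin: "finite Y" and t: "0 < t" "t \<le> w" "w \<le> w'"
    and St: "steiner_system w w' Y Bs" and R: "partition_on Bs R"
    and RS: "\<forall>C\<in>R. steiner_system t w' Y C"
    and Q: "lgmhp t w {..<w'} g Q"
  shows "\<exists>P. lgmhp t w Y g P"
proof -
  have Bsub: "B \<subseteq> Y" "card B = w'" if "B \<in> Bs" for B
    using steiner_blocks[OF St that] by auto
  have "\<forall>B\<in>Bs. \<exists>f. bij_betw f {..<w'} B"
  proof
    fix B assume "B \<in> Bs"
    then have "finite B" "card B = w'" using Bsub[of B] fin by (auto intro: finite_subset)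
    then show "\<exists>f. bij_betw f {..<w'} B" using ex_bij_betw_nat_finite[of B]
      by (simp add: atLeast0LessThan)
  qed
  then obtain phi where phi: "\<And>B. B \<in> Bs \<Longrightarrow> bij_betw (phi B) {..<w'} B" by metis
  have phi_inj: "inj_on (phi B) {..<w'}" and phi_im: "phi B ` {..<w'} = B" if "B \<in> Bs" for B
    using phi[OF that] by (auto simp: bij_betw_def)
  have CBs: "C \<subseteq> Bs" if "C \<in> R" for C using R that by (auto simp: partition_on_def)
  have Cne: "C \<noteq> {}" if "C \<in> R" for C using R that by (auto simp: partition_on_def)
  have CS: "steiner_system t w' Y C" if "C \<in> R" for C using RS that by blast
  have Rdisj: "C1 = C2" if "C1 \<in> R" "C2 \<in> R" "B \<in> C1" "B \<in> C2" for C1 C2 B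
    using R that unfolding partition_on_def disjoint_def by blast
  have Runion: "\<exists>C\<in>R. B \<in> C" if "B \<in> Bs" for B using R that by (auto simp: partition_on_def)
  have QU: "\<Union>Q = {q. transversal {..<w'} g w q}" and Qne: "{} \<notin> Q" and Qdisj: "disjoint Q"
    and Qg: "\<forall>Qj\<in>Q. gmhp t w {..<w'} g Qj"
    using Q by (auto simp: lgmhp_def partition_on_def)
  have QT: "transversal {..<w'} g w q" if "Qj \<in> Q" "q \<in> Qj" for Qj q
    using QU that by blast
  have Qdisj': "Q1 = Q2" if "Q1 \<in> Q" "Q2 \<in> Q" "q \<in> Q1" "q \<in> Q2" for Q1 Q2 q
    using Qdisj that unfolding disjoint_def by blast
  have qfst: "fst ` q \<subseteq> {..<w'}" if "transversal {..<w'} g w q" for q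
    using that by (auto simp: transversal_def)
  have trfst: "fst ` b \<subseteq> Y" "card (fst ` b) = w" if "transversal Y g w b" for b
    using that by (auto simp: transversal_def card_image)
  have finT: "finite {b. transversal Y g w b}"
  proof (rule finite_subset)
    show "{b. transversal Y g w b} \<subseteq> Pow (Y \<times> {1..g})" by (auto simp: transversal_def)
    show "finite (Pow (Y \<times> {1..g}))" using fin by simp
  qed
  have liftB: "transversal Y g w (lift (phi B) q)" "fst ` lift (phi B) q \<subseteq> B"
    if "B \<in> Bs" "transversal {..<w'} g w q" for B q
  proof -
    show "transversal Y g w (lift (phi B) q)"
      using transversal_lift[OF that(2) phi_inj[OF that(1)]] phi_im[OF that(1)] Bsub[OF that(1)] by simp
    show "fst ` lift (phi B) q \<subseteq> B"
      using qfst[OF that(2)] phi_im[OF that(1)] by (auto simp: fst_lift)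
  qed
  have supp_unique: "B1 = B2" if "B1 \<in> Bs" "B2 \<in> Bs" "S \<subseteq> B1" "S \<subseteq> B2" "card S = w" for B1 B2 S
    using steiner_unique[OF St that] .
  define D where "D C Qj = (\<Union>B\<in>C. lift (phi B) ` Qj)" for C Qj
  define P where "P = (\<lambda>(C, Qj). D C Qj) ` (R \<times> Q)"
  have Dmem: "\<exists>B q. B \<in> C \<and> q \<in> Qj \<and> b = lift (phi B) q" if "b \<in> D C Qj" for b C Qj
    using that unfolding D_def by blast
  have Dsub: "D C Qj \<subseteq> {b. transversal Y g w b}" if "C \<in> R" "Qj \<in> Q" for C Qj
    using that liftB QT CBs unfolding D_def by blast
  have finD: "finite (D C Qj)" if "C \<in> R" "Qj \<in> Q" for C Qj
    using finite_subset[OF Dsub[OF that] finT] .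
  have Deq: "C1 = C2 \<and> Q1 = Q2"
    if as: "C1 \<in> R" "Q1 \<in> Q" "C2 \<in> R" "Q2 \<in> Q" "b \<in> D C1 Q1" "b \<in> D C2 Q2" for C1 Q1 C2 Q2 b
  proof -
    obtain B1 q1 where 1: "B1 \<in> C1" "q1 \<in> Q1" "b = lift (phi B1) q1" using Dmem[OF as(5)] by blast
    obtain B2 q2 where 2: "B2 \<in> C2" "q2 \<in> Q2" "b = lift (phi B2) q2" using Dmem[OF as(6)] by blast
    have B1: "B1 \<in> Bs" and B2: "B2 \<in> Bs" using 1 2 CBs that by auto
    have tb: "transversal Y g w b" using liftB(1)[OF B1 QT[OF as(2) 1(2)]] 1 by simp
    have "fst ` b \<subseteq> B1" using liftB(2)[OF B1 QT[OF as(2) 1(2)]] 1 by simp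
    moreover have "fst ` b \<subseteq> B2" using liftB(2)[OF B2 QT[OF as(4) 2(2)]] 2 by simp
    ultimately have BB: "B1 = B2" using supp_unique[OF B1 B2] trfst[OF tb] by blast
    then have "C1 = C2" using Rdisj[OF as(1,3) 1(1)] 2(1) by simp
    moreover have "q1 = q2"
      using pull_lift[OF phi_inj[OF B1] qfst[OF QT[OF as(2) 1(2)]]]
        pull_lift[OF phi_inj[OF B1] qfst[OF QT[OF as(4) 2(2)]]] 1(3) 2(3) BB by metis
    ultimately show ?thesis using Qdisj'[OF as(2,4) 1(2)] 2(2) by simp
  qed
  have part: "partition_on {b. transversal Y g w b} P"
  proof (rule partition_onI)
    show "\<Union>P = {b. transversal Y g w b}"
    proof
      show "\<Union>P \<subseteq> {b. transversal Y g w b}" using Dsub unfolding P_def by blast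
      show "{b. transversal Y g w b} \<subseteq> \<Union>P"
      proof
        fix b assume "b \<in> {b. transversal Y g w b}"
        then have tb: "transversal Y g w b" by simp
        have "fst ` b \<subseteq> Y \<and> card (fst ` b) = w" using trfst[OF tb] by simp
        then have "\<exists>!B. B \<in> Bs \<and> fst ` b \<subseteq> B" using St unfolding steiner_system_def by simp
        then obtain B where B: "B \<in> Bs" "fst ` b \<subseteq> B" by (elim ex1E) blast
        obtain C where C: "C \<in> R" "B \<in> C" using Runion[OF B(1)] by blast
        define q where "q = pull (phi B) {..<w'} b"
        have bq: "lift (phi B) q = b" unfolding q_def using lift_pull B phi_im by metis
        have "transversal {..<w'} g w q" unfolding q_def
          using transversal_pull[OF tb phi_inj[OF B(1)]] B phi_im by metis
        then obtain Qj where Qj: "Qj \<in> Q" "q \<in> Qj" using QU by blast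
        have "b \<in> D C Qj" unfolding D_def using C Qj bq by blast
        then show "b \<in> \<Union>P" unfolding P_def using C Qj by blast
      qed
    qed
    show "disjnt p q" if as: "p \<in> P" "q \<in> P" "p \<noteq> q" for p q
    proof -
      obtain C1 Q1 where 1: "C1 \<in> R" "Q1 \<in> Q" "p = D C1 Q1" using as(1) unfolding P_def by blast
      obtain C2 Q2 where 2: "C2 \<in> R" "Q2 \<in> Q" "q = D C2 Q2" using as(2) unfolding P_def by blast
      show ?thesis unfolding disjnt_def
      proof (rule ccontr)
        assume "p \<inter> q \<noteq> {}"
        then obtain b where "b \<in> D C1 Q1" "b \<in> D C2 Q2" using 1 2 by blast
        then have "C1 = C2 \<and> Q1 = Q2" using Deq[OF 1(1,2) 2(1,2)] by blast
        then show False using 1 2 as(3) by simp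
      qed
    qed
    show "{} \<notin> P"
    proof
      assume "{} \<in> P"
      then obtain C Qj where 1: "C \<in> R" "Qj \<in> Q" "D C Qj = {}" unfolding P_def by auto
      obtain B where "B \<in> C" using Cne[OF 1(1)] by blast
      moreover obtain q where "q \<in> Qj" using Qne 1(2) by (metis ex_in_conv)
      ultimately have "lift (phi B) q \<in> D C Qj" unfolding D_def by blast
      then show False using 1 by simp
    qed
  qed
  have gm: "gmhp t w Y g (D C Qj)" if C: "C \<in> R" and Qj: "Qj \<in> Q" for C Qj
  proof -
    have QjG: "gmhp t w {..<w'} g Qj" using Qg Qj by blast
    have Qpack: "card {q\<in>Qj. T \<subseteq> q} \<le> 1"
      if "T \<subseteq> {..<w'} \<times> {1..g}" "card T = t" "inj_on fst T" for T
      using QjG that unfolding gmhp_def hpacking_def by blast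
    have Qdist: "2 * (w - t + 1) \<le> hdist {..<w'} q1 q2" if "q1 \<in> Qj" "q2 \<in> Qj" "q1 \<noteq> q2" for q1 q2
      using QjG that unfolding gmhp_def by blast
    have Qcard: "real (card Qj) = real g ^ (t - 1) * real (w' choose t) / real (w choose t)"
      using QjG unfolding gmhp_def by simp
    have finQj: "finite Qj"
      using finite_subset[OF _ finite_transversal[of "{..<w'}" g w]] QT[OF Qj] by blast
    have CB: "B \<in> Bs" if "B \<in> C" for B using CBs[OF C] that by blast
    have pack: "hpacking t w Y g (D C Qj)" unfolding hpacking_def
    proof (intro conjI allI impI ballI)
      fix b assume "b \<in> D C Qj" then show "transversal Y g w b" using Dsub[OF C Qj] by blast
    next
      fix T assume T: "T \<subseteq> Y \<times> {1..g} \<and> card T = t \<and> inj_on fst T"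
      have "\<forall>b1\<in>{b\<in>D C Qj. T \<subseteq> b}. \<forall>b2\<in>{b\<in>D C Qj. T \<subseteq> b}. b1 = b2"
      proof (intro ballI)
        fix b1 b2 assume b1: "b1 \<in> {b\<in>D C Qj. T \<subseteq> b}" and b2: "b2 \<in> {b\<in>D C Qj. T \<subseteq> b}"
        obtain B1 q1 where 1: "B1 \<in> C" "q1 \<in> Qj" "b1 = lift (phi B1) q1" using Dmem b1 by blast
        obtain B2 q2 where 2: "B2 \<in> C" "q2 \<in> Qj" "b2 = lift (phi B2) q2" using Dmem b2 by blast
        have B1: "B1 \<in> Bs" and B2: "B2 \<in> Bs" using CB 1 2 by auto
        have s1: "fst ` T \<subseteq> B1" using liftB(2)[OF B1 QT[OF Qj 1(2)]] 1(3) b1 by blast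
        have s2: "fst ` T \<subseteq> B2" using liftB(2)[OF B2 QT[OF Qj 2(2)]] 2(3) b2 by blast
        have ct: "card (fst ` T) = t" using T card_image by metis
        have BB: "B1 = B2" using steiner_unique[OF CS[OF C] 1(1) 2(1) s1 s2 ct] .
        define T' where "T' = pull (phi B1) {..<w'} T"
        have tT: "transversal Y g t T" using T unfolding transversal_def by simp
        have tT': "transversal {..<w'} g t T'"
          using transversal_pull[OF tT phi_inj[OF B1]] s1 phi_im[OF B1] unfolding T'_def by metis
        have "T' \<subseteq> pull (phi B1) {..<w'} b1" unfolding T'_def using b1 pull_mono by blast
        then have T1: "T' \<subseteq> q1" using pull_lift[OF phi_inj[OF B1] qfst[OF QT[OF Qj 1(2)]]] 1(3) by simp
        have "T' \<subseteq> pull (phi B1) {..<w'} b2" unfolding T'_def using b2 pull_mono by blast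
        then have T2: "T' \<subseteq> q2" using pull_lift[OF phi_inj[OF B1] qfst[OF QT[OF Qj 2(2)]]] 2(3) BB by simp
        have "card {q\<in>Qj. T' \<subseteq> q} \<le> 1" using Qpack tT' unfolding transversal_def by blast
        moreover have "finite {q\<in>Qj. T' \<subseteq> q}" using finQj by simp
        ultimately have "q1 = q2" using card_le_Suc0_iff_eq[of "{q\<in>Qj. T' \<subseteq> q}"] T1 T2 1(2) 2(2) by simp
        then show "b1 = b2" using 1 2 BB by simp
      qed
      moreover have "finite {b\<in>D C Qj. T \<subseteq> b}" using finD[OF C Qj] by simp
      ultimately show "card {b\<in>D C Qj. T \<subseteq> b} \<le> 1"
        using card_le_Suc0_iff_eq[of "{b\<in>D C Qj. T \<subseteq> b}"] by simp
    qed
    have dist: "2 * (w - t + 1) \<le> hdist Y b1 b2" if b1: "b1 \<in> D C Qj" and b2: "b2 \<in> D C Qj" and ne: "b1 \<noteq> b2" for b1 b2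
    proof -
      obtain B1 q1 where 1: "B1 \<in> C" "q1 \<in> Qj" "b1 = lift (phi B1) q1" using Dmem b1 by blast
      obtain B2 q2 where 2: "B2 \<in> C" "q2 \<in> Qj" "b2 = lift (phi B2) q2" using Dmem b2 by blast
      have B1: "B1 \<in> Bs" and B2: "B2 \<in> Bs" using CB 1 2 by auto
      have tq1: "transversal {..<w'} g w q1" and tq2: "transversal {..<w'} g w q2" using QT Qj 1 2 by auto
      have tb1: "transversal Y g w b1" and tb2: "transversal Y g w b2" using Dsub[OF C Qj] b1 b2 by auto
      have sb1: "fst ` b1 \<subseteq> B1" using liftB(2)[OF B1 tq1] 1(3) by simp
      have sb2: "fst ` b2 \<subseteq> B2" using liftB(2)[OF B2 tq2] 2(3) by simp
      show ?thesis
      proof (cases "B1 = B2")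
        case True
        have "q1 \<noteq> q2" using ne 1 2 True by auto
        then have Qd: "2 * (w - t + 1) \<le> hdist {..<w'} q1 q2" using Qdist 1(2) 2(2) by blast
        have inj1: "inj_on fst q1" and inj2: "inj_on fst q2" using tq1 tq2 by (auto simp: transversal_def)
        have wl1: "word b1 (phi B1 y) = word q1 y" if "y \<in> {..<w'}" for y
          using word_lift[OF phi_inj[OF B1] qfst[OF tq1] inj1 that] 1(3) by simp
        have wl2: "word b2 (phi B1 y) = word q2 y" if "y \<in> {..<w'}" for y
          using word_lift[OF phi_inj[OF B1] qfst[OF tq2] inj2 that] 2(3) True by simp
        have seteq: "{x\<in>Y. word b1 x \<noteq> word b2 x} = phi B1 ` {y\<in>{..<w'}. word q1 y \<noteq> word q2 y}"
        proof
          show "{x\<in>Y. word b1 x \<noteq> word b2 x} \<subseteq> phi B1 ` {y\<in>{..<w'}. word q1 y \<noteq> word q2 y}"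
          proof
            fix x assume x: "x \<in> {x\<in>Y. word b1 x \<noteq> word b2 x}"
            have "x \<in> B1"
            proof (rule ccontr)
              assume "x \<notin> B1"
              then have "x \<notin> fst ` b1" "x \<notin> fst ` b2" using sb1 sb2 True by auto
              then have "word b1 x = 0" "word b2 x = 0" using word_notin by metis+
              then show False using x by simp
            qed
            then obtain y where y: "y \<in> {..<w'}" "x = phi B1 y" using phi_im[OF B1] by blast
            then show "x \<in> phi B1 ` {y\<in>{..<w'}. word q1 y \<noteq> word q2 y}"
              using x wl1[OF y(1)] wl2[OF y(1)] by auto
          qed
          show "phi B1 ` {y\<in>{..<w'}. word q1 y \<noteq> word q2 y} \<subseteq> {x\<in>Y. word b1 x \<noteq> word b2 x}"
          proof
            fix x assume "x \<in> phi B1 ` {y\<in>{..<w'}. word q1 y \<noteq> word q2 y}"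
            then obtain y where y: "y \<in> {..<w'}" "word q1 y \<noteq> word q2 y" "x = phi B1 y" by blast
            have "x \<in> Y" using y(1,3) phi_im[OF B1] Bsub[OF B1] by blast
            then show "x \<in> {x\<in>Y. word b1 x \<noteq> word b2 x}" using y wl1[OF y(1)] wl2[OF y(1)] by simp
          qed
        qed
        have "hdist Y b1 b2 = hdist {..<w'} q1 q2" unfolding hdist_def seteq
          by (rule card_image) (rule inj_on_subset[OF phi_inj[OF B1]], blast)
        then show ?thesis using Qd by simp
      next
        case False
        have ci: "card (B1 \<inter> B2) < t" using block_inter[OF fin CS[OF C] 1(1) 2(1) False] .
        define S1 where "S1 = fst ` b1"
        define S2 where "S2 = fst ` b2"
        have S: "card S1 = w" "card S2 = w" "S1 \<subseteq> Y" "S2 \<subseteq> Y"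
          using trfst[OF tb1] trfst[OF tb2] unfolding S1_def S2_def by auto
        have finS: "finite S1" "finite S2" using S fin finite_subset by auto
        have "S1 \<inter> S2 \<subseteq> B1 \<inter> B2" using sb1 sb2 unfolding S1_def S2_def by blast
        moreover have "finite (B1 \<inter> B2)" using Bsub[OF B1] fin by (auto intro: finite_subset)
        ultimately have "card (S1 \<inter> S2) \<le> card (B1 \<inter> B2)" by (meson card_mono)
        then have c: "card (S1 \<inter> S2) \<le> t - 1" using ci by simp
        have sub: "(S1 - S2) \<union> (S2 - S1) \<subseteq> {x\<in>Y. word b1 x \<noteq> word b2 x}"
        proof
          fix x assume x: "x \<in> (S1 - S2) \<union> (S2 - S1)"
          have p1: "b1 \<subseteq> Y \<times> {1..g}" "inj_on fst b1" and p2: "b2 \<subseteq> Y \<times> {1..g}" "inj_on fst b2"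
            using tb1 tb2 by (auto simp: transversal_def)
          show "x \<in> {x\<in>Y. word b1 x \<noteq> word b2 x}"
          proof (cases "x \<in> S1")
            case True
            then have "x \<notin> S2" using x by blast
            then have "word b1 x \<noteq> 0" "word b2 x = 0"
              using word_pos[OF p1] True word_notin unfolding S1_def S2_def by auto
            then show ?thesis using True S by auto
          next
            case False
            then have "x \<in> S2" using x by blast
            then have "word b2 x \<noteq> 0" "word b1 x = 0"
              using word_pos[OF p2] False word_notin unfolding S1_def S2_def by auto
            then show ?thesis using \<open>x \<in> S2\<close> S by auto
          qed
        qed
        have "card ((S1 - S2) \<union> (S2 - S1)) = card (S1 - S2) + card (S2 - S1)"
          by (rule card_Un_disjoint) (use finS in auto)
        also have "\<dots> = (w - card (S1 \<inter> S2)) + (w - card (S1 \<inter> S2))"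
          using card_Diff_subset_Int[of S1 S2] card_Diff_subset_Int[of S2 S1] finS S
          by (simp add: Int_commute)
        finally have e: "card ((S1 - S2) \<union> (S2 - S1)) = (w - card (S1 \<inter> S2)) + (w - card (S1 \<inter> S2))" .
        have "card ((S1 - S2) \<union> (S2 - S1)) \<le> hdist Y b1 b2"
          unfolding hdist_def by (rule card_mono) (use fin sub in auto)
        moreover have "2 * (w - t + 1) \<le> (w - card (S1 \<inter> S2)) + (w - card (S1 \<inter> S2))"
          using c t by arith
        ultimately show ?thesis using e by linarith
      qed
    qed
    have cnt: "card (D C Qj) = card C * card Qj"
    proof -
      have finC: "finite C" using CB Bsub fin
        by (meson finite_Pow_iff finite_subset subsetI PowI)
      have "card (D C Qj) = (\<Sum>B\<in>C. card (lift (phi B) ` Qj))" unfolding D_def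
      proof (rule card_UN_disjoint[OF finC])
        show "\<forall>B\<in>C. finite (lift (phi B) ` Qj)" using finQj by simp
        show "\<forall>B1\<in>C. \<forall>B2\<in>C. B1 \<noteq> B2 \<longrightarrow> lift (phi B1) ` Qj \<inter> lift (phi B2) ` Qj = {}"
        proof (intro ballI impI)
          fix B1 B2 assume 1: "B1 \<in> C" and 2: "B2 \<in> C" and ne: "B1 \<noteq> B2"
          show "lift (phi B1) ` Qj \<inter> lift (phi B2) ` Qj = {}"
          proof (rule ccontr)
            assume "lift (phi B1) ` Qj \<inter> lift (phi B2) ` Qj \<noteq> {}"
            then obtain q1 q2 where q: "q1 \<in> Qj" "q2 \<in> Qj" "lift (phi B1) q1 = lift (phi B2) q2" by blast
            have B1: "B1 \<in> Bs" and B2: "B2 \<in> Bs" using CB 1 2 by auto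
            have tb: "transversal Y g w (lift (phi B1) q1)" using liftB(1)[OF B1 QT[OF Qj q(1)]] .
            have "fst ` lift (phi B1) q1 \<subseteq> B1 \<inter> B2"
              using liftB(2)[OF B1 QT[OF Qj q(1)]] liftB(2)[OF B2 QT[OF Qj q(2)]] q(3) by auto
            moreover have "finite (B1 \<inter> B2)" using Bsub[OF B1] fin by (auto intro: finite_subset)
            ultimately have "card (fst ` lift (phi B1) q1) \<le> card (B1 \<inter> B2)" by (meson card_mono)
            then show False using trfst(2)[OF tb] block_inter[OF fin CS[OF C] 1 2 ne] t by simp
          qed
        qed
      qed
      also have "\<dots> = (\<Sum>B\<in>C. card Qj)"
      proof (rule sum.cong[OF refl])
        fix B assume "B \<in> C"
        then have B: "B \<in> Bs" using CB by blast
        have "inj_on (lift (phi B)) Qj"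
        proof (rule inj_onI)
          fix q1 q2 assume "q1 \<in> Qj" "q2 \<in> Qj" "lift (phi B) q1 = lift (phi B) q2"
          then show "q1 = q2"
            using pull_lift[OF phi_inj[OF B] qfst[OF QT[OF Qj]]] by metis
        qed
        then show "card (lift (phi B) ` Qj) = card Qj" by (rule card_image)
      qed
      finally show ?thesis by simp
    qed
    have cb: "card C * (w' choose t) = card Y choose t" using count_blocks[OF fin CS[OF C]] .
    have wpos: "w choose t > 0" using t by simp
    have "real (card (D C Qj)) = real (card C) * real (card Qj)" using cnt by simp
    also have "\<dots> = real g ^ (t - 1) * (real (card C) * real (w' choose t)) / real (w choose t)"
      using Qcard by simp
    also have "\<dots> = real g ^ (t - 1) * real (card Y choose t) / real (w choose t)"
      using cb by (metis of_nat_mult)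
    finally have "real (card (D C Qj)) = real g ^ (t - 1) * real (card Y choose t) / real (w choose t)" .
    then show ?thesis unfolding gmhp_def using pack dist by blast
  qed
  have "lgmhp t w Y g P" unfolding lgmhp_def using part gm unfolding P_def by auto
  then show ?thesis by blast
qed

lemma steiner_image:
  assumes St: "steiner_system s k X B" and h: "bij_betw h X Y"
  shows "steiner_system s k Y ((`) h ` B)"
proof -
  have inj: "inj_on h X" and im: "h ` X = Y" using h by (auto simp: bij_betw_def)
  have bl: "b \<subseteq> X" "card b = k" if "b \<in> B" for b using steiner_blocks[OF St that] by auto
  show ?thesis unfolding steiner_system_def
  proof (intro conjI ballI allI impI)
    fix b' assume "b' \<in> (`) h ` B"
    then obtain b where b: "b \<in> B" "b' = h ` b" by blast
    show "b' \<subseteq> Y" using bl[OF b(1)] b(2) im by auto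
    show "card b' = k"
      using bl[OF b(1)] b(2) card_image[OF inj_on_subset[OF inj bl(1)[OF b(1)]]] by auto
  next
    fix S assume S: "S \<subseteq> Y \<and> card S = s"
    define S0 where "S0 = X \<inter> h -` S"
    have S0X: "S0 \<subseteq> X" unfolding S0_def by blast
    have hS0: "h ` S0 = S" unfolding S0_def using S im by blast
    have cS0: "card S0 = s" using card_image[OF inj_on_subset[OF inj S0X]] hS0 S by simp
    have "\<exists>!b. b \<in> B \<and> S0 \<subseteq> b" using St S0X cS0 unfolding steiner_system_def by simp
    then obtain b where b: "b \<in> B" "S0 \<subseteq> b" and u: "\<forall>y. y \<in> B \<and> S0 \<subseteq> y \<longrightarrow> y = b"
      by (elim ex1E) blast
    show "\<exists>!b'. b' \<in> (`) h ` B \<and> S \<subseteq> b'"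
    proof (rule ex1I[of _ "h ` b"])
      show "h ` b \<in> (`) h ` B \<and> S \<subseteq> h ` b" using b hS0 by blast
    next
      fix b' assume b': "b' \<in> (`) h ` B \<and> S \<subseteq> b'"
      then obtain b1 where b1: "b1 \<in> B" "b' = h ` b1" by blast
      have "S0 \<subseteq> b1"
      proof
        fix x assume x: "x \<in> S0"
        then have "h x \<in> h ` b1" using b' b1 hS0 by blast
        then obtain y where y: "y \<in> b1" "h x = h y" by blast
        have "x \<in> X" "y \<in> X" using x S0X y bl[OF b1(1)] by auto
        then have "x = y" using y(2) inj_onD[OF inj] by blast
        then show "x \<in> b1" using y by simp
      qed
      then have "b1 = b" using u b1 by blast
      then show "b' = h ` b" using b1 by simp
    qed
  qed
qed

theorem theorem3p9:
  fixes t w w' n g :: nat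
  assumes "0 < t" and "0 < w" and "0 < w'" and "0 < n" and "0 < g"
    and "t \<le> w" and "w \<le> w'"
    and "\<exists>(X :: nat set) B. finite X \<and> card X = n \<and> t_resolvable t w w' X B"
    and "\<exists>P. lgmhp t w {..<w'} g P"
  shows "\<exists>P. lgmhp t w {..<n} g P"
proof -
  obtain X :: "nat set" and B where X: "finite X" "card X = n" and tr: "t_resolvable t w w' X B"
    using assms(8) by blast
  obtain R where St: "steiner_system w w' X B" and R: "partition_on B R"
    and RS: "\<forall>C\<in>R. steiner_system t w' X C"
    using tr unfolding t_resolvable_def by blast
  obtain Q where Q: "lgmhp t w {..<w'} g Q" using assms(9) by blast
  obtain h where h: "bij_betw h X {..<n}" using finite_same_card_bij[OF X(1), of "{..<n}"] X by auto
  have inj: "inj_on h X" using h by (simp add: bij_betw_def)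
  have BX: "\<Union>B \<subseteq> X" using steiner_blocks[OF St] by blast
  have "inj_on ((`) h) B" by (rule inj_on_image) (rule inj_on_subset[OF inj BX])
  then have R0: "partition_on ((`) h ` B) ((`) ((`) h) ` R - {{}})"
    by (rule partition_on_inj_image[OF R])
  have "{} \<notin> (`) ((`) h) ` R" using R by (auto simp: partition_on_def)
  then have R': "partition_on ((`) h ` B) ((`) ((`) h) ` R)" using R0 by simp
  have St': "steiner_system w w' {..<n} ((`) h ` B)" using steiner_image[OF St h] .
  have RS': "\<forall>C\<in>(`) ((`) h) ` R. steiner_system t w' {..<n} C" using RS steiner_image[OF _ h] by blast
  show ?thesis using main[OF _ _ _ _ St' R' RS' Q] assms by simp
qed

end
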